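(* Consider a sequence of designs indexed by $n$ as in the context, and let $\hat\mu_n\in\mathbb{R}^k$ be a moment-type estimator, i.e. there are fixed integers $l_1\ge 1$, $l_2\ge 0$ and, for each $n$, nonrandom vectors $\phi^1,\dots,\phi^{l_1+l_2}\in\mathbb{R}^{kn}$ and a known map $F=F_n:\mathbb{R}^{l_1+l_2}\to\mathbb{R}^k$ such that: (i) $\hat\mu_n=F(\hat m_n^1,\dots,\hat m_n^{l_1},m_n^{l_1+1},\dots,m_n^{l_1+l_2})$, where $\hat m_n^s=\frac1n 1_{kn}'\pi^{-1}\mathbf{R}\phi^s$ for $s\le l_1$ and $m_n^s=\frac1n 1_{kn}'\phi^s$ for all $s$; (ii) (uniform local Lipschitz property) there exist $N$, $C>0$, $\epsilon>0$ such that for all $n\ge N$ and all $(\tilde m^1,\dots,\tilde m^{l_1})$ with $\sum_{s=1}^{l_1}(\tilde m^s-m_n^s)^2<\epsilon$, $\|F(\tilde m^1,\dots,\tilde m^{l_1},m_n^{l_1+1},\dots,m_n^{l_1+l_2})-F(m_n^1,\dots,m_n^{l_1+l_2})\|_2\le C\sqrt{\sum_{s=1}^{l_1}(\tilde m^s-m_n^s)^2}$; (iii) there is $C'$ with $\frac1n\|\phi^s\|_2^2\le C'$ for all $s$ and all $n$. Let $\mu_n:=F(m_n^1,\dots,m_n^{l_1+l_2})$. If $|||\mathbf{D}|||_2/n\to 0$, then $$\hat\mu_n-\mu_n=O_p\Big(\sqrt{|||\mathbf{D}|||_2/n}\Big).$$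
   Context: Setup: there are $k$ treatment arms and $n$ units; $k$ is fixed while $n\to\infty$ along a sequence of finite populations, each with its own randomized design. All probabilities, expectations, variances, $O_p$ and $o_p$ refer only to the randomness of the treatment assignment (potential outcomes, covariates and all vectors called nonrandom are fixed). For unit $i$ and arm $a$, $\mathbf{R}_{ai}\in\{0,1\}$ indicates that unit $i$ is assigned to arm $a$; each unit is assigned to exactly one arm. $\mathbf{R}$ denotes the $kn\times kn$ diagonal matrix with diagonal $(\mathbf{R}_{11},\dots,\mathbf{R}_{1n},\mathbf{R}_{21},\dots,\mathbf{R}_{kn})$, and $\pi=\mathrm{E}[\mathbf{R}]$ is the diagonal matrix of assignment probabilities $\pi_{ai}$, assumed to lie in $(0,1)$. $1_{kn}$ is the all-ones vector in $\mathbb{R}^{kn}$. The first-order design matrix is $\mathbf{D}=\mathrm{Var}(\pi^{-1}\mathbf{R}1_{kn})\in\mathbb{R}^{kn\times kn}$, the covariance matrix of the vector with entries $\mathbf{R}_{ai}/\pi_{ai}$. $|||A|||_2$ denotes the spectral norm (largest singular value, equal to the largest eigenvalue for positive semidefinite $A$). *)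

theory Defs
  imports "HOL-Probability.Probability"
begin

text \<open>A design on n units and k arms is a pmf over assignment functions z, where
  z i is the arm of unit i (only i < n matters).
  Vectors in R^{kn} are functions nat => nat => real indexed by (arm a, unit i),
  a < k, i < n.\<close>

definition assign_ind :: "(nat \<Rightarrow> nat) \<Rightarrow> nat \<Rightarrow> nat \<Rightarrow> real" where
  "assign_ind z a i = (if z i = a then 1 else 0)"

definition assign_prob :: "(nat \<Rightarrow> nat) pmf \<Rightarrow> nat \<Rightarrow> nat \<Rightarrow> real" where
  "assign_prob p a i = measure_pmf.prob p {z. z i = a}"

text \<open>First-order design matrix D = Var(pi^{-1} R 1), entry ((a,i),(b,j)).\<close>
definition design_matrix :: "(nat \<Rightarrow> nat) pmf \<Rightarrow> nat \<times> nat \<Rightarrow> nat \<times> nat \<Rightarrow> real" where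
  "design_matrix p = (\<lambda>(a,i) (b,j).
     measure_pmf.expectation p (\<lambda>z.
       (assign_ind z a i / assign_prob p a i - 1) *
       (assign_ind z b j / assign_prob p b j - 1)))"

definition spec_norm :: "'i set \<Rightarrow> ('i \<Rightarrow> 'i \<Rightarrow> real) \<Rightarrow> real" where
  "spec_norm I M = Sup {sqrt (\<Sum>p\<in>I. (\<Sum>q\<in>I. M p q * x q)\<^sup>2) | x. (\<Sum>q\<in>I. (x q)\<^sup>2) \<le> 1}"

definition bigOp :: "(nat \<Rightarrow> (nat \<Rightarrow> nat) pmf) \<Rightarrow> (nat \<Rightarrow> (nat \<Rightarrow> nat) \<Rightarrow> real) \<Rightarrow> (nat \<Rightarrow> real) \<Rightarrow> bool" where
  "bigOp P X r = (\<forall>\<epsilon>>0. \<exists>M N. \<forall>n\<ge>N.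
      measure_pmf.prob (P n) {z. \<bar>X n z\<bar> > M * r n} < \<epsilon>)"

end

theory Submission
  imports Defs
begin

definition bndf :: "('a \<Rightarrow> real) \<Rightarrow> bool" where
  "bndf f \<longleftrightarrow> (\<exists>B. \<forall>z. \<bar>f z\<bar> \<le> B)"

lemma bndf_const: "bndf (\<lambda>z. c)" unfolding bndf_def by auto

lemma bndf_mult:
  assumes "bndf f" "bndf g" shows "bndf (\<lambda>z. f z * g z)"
proof -
  obtain B1 B2 where b: "\<forall>z. \<bar>f z\<bar> \<le> B1" "\<forall>z. \<bar>g z\<bar> \<le> B2"
    using assms unfolding bndf_def by blast
  have "\<bar>f z * g z\<bar> \<le> B1 * B2" for z
    unfolding abs_mult using b by (meson abs_ge_zero mult_mono order.trans)
  then show ?thesis unfolding bndf_def by blast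
qed

lemma bndf_add:
  assumes "bndf f" "bndf g" shows "bndf (\<lambda>z. f z + g z)"
proof -
  obtain B1 B2 where b: "\<forall>z. \<bar>f z\<bar> \<le> B1" "\<forall>z. \<bar>g z\<bar> \<le> B2"
    using assms unfolding bndf_def by blast
  have "\<bar>f z + g z\<bar> \<le> B1 + B2" for z
    using b abs_triangle_ineq[of "f z" "g z"] by (meson add_mono order.trans)
  then show ?thesis unfolding bndf_def by blast
qed

lemma bndf_diff:
  assumes "bndf f" "bndf g" shows "bndf (\<lambda>z. f z - g z)"
proof -
  have "bndf (\<lambda>z. (-1) * g z)" by (rule bndf_mult[OF bndf_const assms(2)])
  then have "bndf (\<lambda>z. f z + (-1) * g z)" by (rule bndf_add[OF assms(1)])
  then show ?thesis by simp
qed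

lemma bndf_sum:
  assumes "finite A" "\<And>x. x \<in> A \<Longrightarrow> bndf (f x)"
  shows "bndf (\<lambda>z. \<Sum>x\<in>A. f x z)"
  using assms
proof (induction A rule: finite_induct)
  case empty then show ?case by (simp add: bndf_const)
next
  case (insert x F)
  then have "bndf (\<lambda>z. f x z + (\<Sum>x\<in>F. f x z))"
    by (intro bndf_add) (auto simp: bndf_def)
  then show ?case using insert by simp
qed

lemma bndf_ind: "bndf (\<lambda>z. assign_ind z a i / c)"
  unfolding bndf_def assign_ind_def
  by (rule exI[of _ "\<bar>1 / c\<bar>"]) auto

lemma bndf_integrable:
  assumes "bndf f" shows "integrable (measure_pmf p) f"
proof -
  obtain B where "\<forall>z. \<bar>f z\<bar> \<le> B" using assms unfolding bndf_def by blast
  then show ?thesis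
    by (intro measure_pmf.integrable_const_bound[where B=B]) auto
qed

lemma spec_bdd:
  assumes "finite I"
  shows "bdd_above {sqrt (\<Sum>p\<in>I. (\<Sum>q\<in>I. M p q * x q)\<^sup>2) | x. (\<Sum>q\<in>I. (x q)\<^sup>2) \<le> 1}"
proof (rule bdd_aboveI[where M="\<Sum>p\<in>I. \<Sum>q\<in>I. \<bar>M p q\<bar>"])
  fix y assume "y \<in> {sqrt (\<Sum>p\<in>I. (\<Sum>q\<in>I. M p q * x q)\<^sup>2) | x. (\<Sum>q\<in>I. (x q)\<^sup>2) \<le> 1}"
  then obtain x where y: "y = sqrt (\<Sum>p\<in>I. (\<Sum>q\<in>I. M p q * x q)\<^sup>2)"
    and x: "(\<Sum>q\<in>I. (x q)\<^sup>2) \<le> 1" by blast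
  have xq: "\<bar>x q\<bar> \<le> 1" if "q \<in> I" for q
  proof -
    have "(x q)\<^sup>2 \<le> (\<Sum>q\<in>I. (x q)\<^sup>2)" by (rule member_le_sum) (use that assms in auto)
    then have "(x q)\<^sup>2 \<le> 1" using x by linarith
    then show ?thesis by (simp add: abs_square_le_1)
  qed
  have "y = L2_set (\<lambda>p. \<Sum>q\<in>I. M p q * x q) I" using y by (simp add: L2_set_def)
  also have "\<dots> \<le> (\<Sum>p\<in>I. \<bar>\<Sum>q\<in>I. M p q * x q\<bar>)" by (rule L2_set_le_sum_abs)
  also have "\<dots> \<le> (\<Sum>p\<in>I. \<Sum>q\<in>I. \<bar>M p q\<bar>)"
  proof (rule sum_mono)
    fix p assume "p \<in> I"
    have "\<bar>\<Sum>q\<in>I. M p q * x q\<bar> \<le> (\<Sum>q\<in>I. \<bar>M p q * x q\<bar>)" by (rule sum_abs)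
    also have "\<dots> \<le> (\<Sum>q\<in>I. \<bar>M p q\<bar>)"
      by (rule sum_mono) (use xq in \<open>auto simp: abs_mult intro: mult_left_le\<close>)
    finally show "\<bar>\<Sum>q\<in>I. M p q * x q\<bar> \<le> (\<Sum>q\<in>I. \<bar>M p q\<bar>)" .
  qed
  finally show "y \<le> (\<Sum>p\<in>I. \<Sum>q\<in>I. \<bar>M p q\<bar>)" .
qed

lemma spec_upper:
  assumes "finite I" "(\<Sum>q\<in>I. (x q)\<^sup>2) \<le> 1"
  shows "sqrt (\<Sum>p\<in>I. (\<Sum>q\<in>I. M p q * x q)\<^sup>2) \<le> spec_norm I M"
  unfolding spec_norm_def
  apply (rule cSup_upper)
  using assms(2) apply blast
  by (rule spec_bdd[OF assms(1)])

lemma spec_nonneg: "finite I \<Longrightarrow> 0 \<le> spec_norm I M"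
  using spec_upper[of I "\<lambda>_. 0" M] by simp

lemma quad_le:
  assumes "finite I"
  shows "(\<Sum>p\<in>I. v p * (\<Sum>q\<in>I. M p q * v q)) \<le> spec_norm I M * (\<Sum>q\<in>I. (v q)\<^sup>2)"
proof -
  define c where "c = sqrt (\<Sum>q\<in>I. (v q)\<^sup>2)"
  have c0: "c \<ge> 0" by (simp add: c_def sum_nonneg)
  have cc: "c * c = (\<Sum>q\<in>I. (v q)\<^sup>2)" unfolding c_def
    by (simp add: sum_nonneg real_sqrt_mult_self)
  show ?thesis
  proof (cases "c = 0")
    case True
    then have "(\<Sum>q\<in>I. (v q)\<^sup>2) = 0" using cc by simp
    then have "\<forall>q\<in>I. v q = 0" using assms by (simp add: sum_nonneg_eq_0_iff)
    then show ?thesis by simp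
  next
    case False
    then have cpos: "c > 0" using c0 by simp
    define x where "x q = v q / c" for q
    have "(\<Sum>q\<in>I. (x q)\<^sup>2) = (\<Sum>q\<in>I. (v q)\<^sup>2) / c\<^sup>2"
      by (simp add: x_def power_divide sum_divide_distrib)
    also have "\<dots> = 1" unfolding cc[symmetric] using False by (simp add: power2_eq_square)
    finally have x1: "(\<Sum>q\<in>I. (x q)\<^sup>2) = 1" .
    define h where "h p = (\<Sum>q\<in>I. M p q * x q)" for p
    have g: "(\<Sum>q\<in>I. M p q * v q) = c * h p" for p
      using False by (simp add: h_def x_def sum_distrib_left)
    have "(\<Sum>p\<in>I. v p * (\<Sum>q\<in>I. M p q * v q)) \<le> (\<Sum>p\<in>I. \<bar>v p\<bar> * \<bar>c * h p\<bar>)"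
      by (rule sum_mono) (simp add: g abs_mult[symmetric])
    also have "\<dots> \<le> L2_set v I * L2_set (\<lambda>p. c * h p) I" by (rule L2_set_mult_ineq)
    also have "L2_set (\<lambda>p. c * h p) I = c * L2_set h I"
      by (rule L2_set_right_distrib[symmetric, OF c0])
    also have "L2_set v I = c" by (simp add: L2_set_def c_def)
    also have "L2_set h I \<le> spec_norm I M"
      using spec_upper[of I x M] x1 assms by (simp add: L2_set_def h_def)
    then have "c * (c * L2_set h I) \<le> c * (c * spec_norm I M)"
      using c0 by (simp add: mult_left_mono)
    also have "c * (c * spec_norm I M) = spec_norm I M * (\<Sum>q\<in>I. (v q)\<^sup>2)"
      using cc by (simp add: mult_ac)
    finally show ?thesis by simp
  qed
qed

lemma var_eq:
  fixes pp :: "(nat \<Rightarrow> nat) pmf"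
  assumes "finite I"
  shows "measure_pmf.expectation pp (\<lambda>z. (\<Sum>q\<in>I. (assign_ind z (fst q) (snd q) / assign_prob pp (fst q) (snd q) - 1) * w q)\<^sup>2)
     = (\<Sum>p\<in>I. w p * (\<Sum>q\<in>I. design_matrix pp p q * w q))"
proof -
  define Y where "Y = (\<lambda>z q. assign_ind z (fst q) (snd q) / assign_prob pp (fst q) (snd q) - 1)"
  have bY: "bndf (\<lambda>z. Y z q)" for q
    unfolding Y_def by (intro bndf_diff bndf_ind bndf_const)
  have D: "design_matrix pp a b = measure_pmf.expectation pp (\<lambda>z. Y z a * Y z b)" for a b
    by (cases a; cases b) (simp add: design_matrix_def Y_def)
  have sq: "(\<lambda>z. (\<Sum>q\<in>I. Y z q * w q)\<^sup>2) = (\<lambda>z. \<Sum>a\<in>I. \<Sum>b\<in>I. w a * w b * (Y z a * Y z b))"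
    by (auto simp: power2_eq_square sum_product mult_ac intro!: ext sum.cong)
  have "measure_pmf.expectation pp (\<lambda>z. (\<Sum>q\<in>I. Y z q * w q)\<^sup>2)
      = (\<Sum>a\<in>I. measure_pmf.expectation pp (\<lambda>z. \<Sum>b\<in>I. w a * w b * (Y z a * Y z b)))"
    unfolding sq
    by (rule Bochner_Integration.integral_sum)
       (intro bndf_integrable bndf_sum assms bndf_mult bndf_const bY)
  also have "\<dots> = (\<Sum>a\<in>I. \<Sum>b\<in>I. w a * w b * design_matrix pp a b)"
  proof (rule sum.cong[OF refl])
    fix a assume "a \<in> I"
    have "measure_pmf.expectation pp (\<lambda>z. \<Sum>b\<in>I. w a * w b * (Y z a * Y z b))
       = (\<Sum>b\<in>I. measure_pmf.expectation pp (\<lambda>z. w a * w b * (Y z a * Y z b)))"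
      by (rule Bochner_Integration.integral_sum)
         (intro bndf_integrable bndf_sum assms bndf_mult bndf_const bY)
    also have "\<dots> = (\<Sum>b\<in>I. w a * w b * design_matrix pp a b)"
      by (simp add: D)
    finally show "measure_pmf.expectation pp (\<lambda>z. \<Sum>b\<in>I. w a * w b * (Y z a * Y z b))
       = (\<Sum>b\<in>I. w a * w b * design_matrix pp a b)" .
  qed
  also have "\<dots> = (\<Sum>p\<in>I. w p * (\<Sum>q\<in>I. design_matrix pp p q * w q))"
    by (simp add: sum_distrib_left mult_ac)
  finally show ?thesis unfolding Y_def .
qed

lemma ET_bound:
  fixes pp :: "(nat \<Rightarrow> nat) pmf" and n k L :: nat and \<phi> :: "nat \<Rightarrow> nat \<Rightarrow> nat \<Rightarrow> real"
    and mm :: "nat \<Rightarrow> real" and mh :: "nat \<Rightarrow> (nat \<Rightarrow> nat) \<Rightarrow> real"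
  assumes mm: "\<And>s. mm s = (1 / real n) * (\<Sum>a<k. \<Sum>i<n. \<phi> s a i)"
    and mh: "\<And>s z. mh s z = (1 / real n) * (\<Sum>a<k. \<Sum>i<n. assign_ind z a i / assign_prob pp a i * \<phi> s a i)"
    and b: "\<And>s. s < L \<Longrightarrow> (1 / real n) * (\<Sum>a<k. \<Sum>i<n. (\<phi> s a i)\<^sup>2) \<le> C'"
  shows "integrable pp (\<lambda>z. \<Sum>s<L. (mh s z - mm s)\<^sup>2)"
    "measure_pmf.expectation pp (\<lambda>z. \<Sum>s<L. (mh s z - mm s)\<^sup>2)
       \<le> real L * C' * (spec_norm ({..<k}\<times>{..<n}) (design_matrix pp) / real n)"
proof -
  define I where "I = {..<k}\<times>{..<n}"
  define Y where "Y = (\<lambda>z q. assign_ind z (fst q) (snd q) / assign_prob pp (fst q) (snd q) - 1)"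
  define w where "w s q = \<phi> s (fst q) (snd q)" for s q
  define S where "S = spec_norm I (design_matrix pp)"
  have fin: "finite I" by (simp add: I_def)
  have diff: "mh s z - mm s = (1/real n) * (\<Sum>q\<in>I. Y z q * w s q)" for s z
  proof -
    have "mh s z - mm s = (1/real n) * (\<Sum>a<k. \<Sum>i<n. (assign_ind z a i / assign_prob pp a i - 1) * \<phi> s a i)"
      by (simp add: mh mm sum_subtractf left_diff_distrib right_diff_distrib)
    also have "\<dots> = (1/real n) * (\<Sum>q\<in>I. Y z q * w s q)"
      by (simp add: I_def Y_def w_def sum.cartesian_product split_beta)
    finally show ?thesis .
  qed
  have bY: "bndf (\<lambda>z. Y z q)" for q
    unfolding Y_def by (intro bndf_diff bndf_ind bndf_const)
  have bnd_each: "bndf (\<lambda>z. (mh s z - mm s)\<^sup>2)" for s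
    unfolding diff power2_eq_square
    by (intro bndf_mult bndf_sum bndf_const fin bY)
  show "integrable pp (\<lambda>z. \<Sum>s<L. (mh s z - mm s)\<^sup>2)"
    by (intro bndf_integrable bndf_sum) (use bnd_each in auto)
  have E1: "measure_pmf.expectation pp (\<lambda>z. (mh s z - mm s)\<^sup>2) \<le> C' * (S / real n)" if "s < L" for s
  proof -
    have "measure_pmf.expectation pp (\<lambda>z. (mh s z - mm s)\<^sup>2)
        = measure_pmf.expectation pp (\<lambda>z. (1/real n)\<^sup>2 * (\<Sum>q\<in>I. Y z q * w s q)\<^sup>2)"
      by (intro Bochner_Integration.integral_cong refl) (simp add: diff power_divide)
    also have "\<dots> = (1/real n)\<^sup>2 * (\<Sum>p\<in>I. w s p * (\<Sum>q\<in>I. design_matrix pp p q * w s q))"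
      unfolding integral_mult_right_zero Y_def by (simp add: var_eq[OF fin])
    also have "\<dots> \<le> (1/real n)\<^sup>2 * (S * (\<Sum>q\<in>I. (w s q)\<^sup>2))"
      by (rule mult_left_mono) (simp_all add: quad_le fin S_def)
    also have "(\<Sum>q\<in>I. (w s q)\<^sup>2) = (\<Sum>a<k. \<Sum>i<n. (\<phi> s a i)\<^sup>2)"
      by (simp add: I_def w_def sum.cartesian_product split_beta)
    also have "(1/real n)\<^sup>2 * (S * (\<Sum>a<k. \<Sum>i<n. (\<phi> s a i)\<^sup>2)) \<le> C' * (S / real n)"
    proof (cases "n = 0")
      case True then show ?thesis by simp
    next
      case False
      have "(1/real n)\<^sup>2 * (S * (\<Sum>a<k. \<Sum>i<n. (\<phi> s a i)\<^sup>2))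
          = (S / real n) * ((1/real n) * (\<Sum>a<k. \<Sum>i<n. (\<phi> s a i)\<^sup>2))"
        by (simp add: power2_eq_square)
      also have "\<dots> \<le> (S / real n) * C'"
        by (rule mult_left_mono) (use b that in \<open>simp_all add: S_def spec_nonneg fin\<close>)
      finally show ?thesis by (simp add: mult_ac)
    qed
    finally show ?thesis .
  qed
  have "measure_pmf.expectation pp (\<lambda>z. \<Sum>s<L. (mh s z - mm s)\<^sup>2)
      = (\<Sum>s<L. measure_pmf.expectation pp (\<lambda>z. (mh s z - mm s)\<^sup>2))"
    by (rule Bochner_Integration.integral_sum) (use bnd_each bndf_integrable in auto)
  also have "\<dots> \<le> (\<Sum>s<L. C' * (S / real n))" by (rule sum_mono) (use E1 in auto)
  also have "\<dots> = real L * C' * (S / real n)" by simp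
  finally show "measure_pmf.expectation pp (\<lambda>z. \<Sum>s<L. (mh s z - mm s)\<^sup>2)
       \<le> real L * C' * (spec_norm ({..<k}\<times>{..<n}) (design_matrix pp) / real n)"
    by (simp add: S_def I_def)
qed

theorem mainTheorem1:
  fixes k l1 l2 :: nat
    and P :: "nat \<Rightarrow> (nat \<Rightarrow> nat) pmf"
    and \<phi> :: "nat \<Rightarrow> nat \<Rightarrow> nat \<Rightarrow> nat \<Rightarrow> real"
    and F :: "nat \<Rightarrow> (nat \<Rightarrow> real) \<Rightarrow> (nat \<Rightarrow> real)"
    and m :: "nat \<Rightarrow> nat \<Rightarrow> real"
    and mhat :: "nat \<Rightarrow> nat \<Rightarrow> (nat \<Rightarrow> nat) \<Rightarrow> real"
  assumes l1: "l1 \<ge> 1"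
    and valid: "\<And>n z i. z \<in> set_pmf (P n) \<Longrightarrow> i < n \<Longrightarrow> z i < k"
    and pi_pos: "\<And>n a i. a < k \<Longrightarrow> i < n \<Longrightarrow> 0 < assign_prob (P n) a i"
    and pi_lt1: "\<And>n a i. a < k \<Longrightarrow> i < n \<Longrightarrow> assign_prob (P n) a i < 1"
    and m_def: "\<And>n s. m n s = (1 / real n) * (\<Sum>a<k. \<Sum>i<n. \<phi> n s a i)"
    and mhat_def: "\<And>n s z. mhat n s z =
        (1 / real n) * (\<Sum>a<k. \<Sum>i<n. assign_ind z a i / assign_prob (P n) a i * \<phi> n s a i)"
    and lip: "\<exists>N C \<epsilon>. C > 0 \<and> \<epsilon> > 0 \<and> (\<forall>n\<ge>N. \<forall>mt :: nat \<Rightarrow> real.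
        (\<Sum>s<l1. (mt s - m n s)\<^sup>2) < \<epsilon> \<longrightarrow>
        sqrt (\<Sum>a<k. (F n (\<lambda>s. if s < l1 then mt s else m n s) a - F n (m n) a)\<^sup>2)
          \<le> C * sqrt (\<Sum>s<l1. (mt s - m n s)\<^sup>2))"
    and bnd: "\<exists>C'. \<forall>n s. s < l1 + l2 \<longrightarrow>
        (1 / real n) * (\<Sum>a<k. \<Sum>i<n. (\<phi> n s a i)\<^sup>2) \<le> C'"
    and D_lim: "(\<lambda>n. spec_norm ({..<k} \<times> {..<n}) (design_matrix (P n)) / real n)
        \<longlonglongrightarrow> 0"
  shows "bigOp P
     (\<lambda>n z. sqrt (\<Sum>a<k. (F n (\<lambda>s. if s < l1 then mhat n s z else m n s) a - F n (m n) a)\<^sup>2))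
     (\<lambda>n. sqrt (spec_norm ({..<k} \<times> {..<n}) (design_matrix (P n)) / real n))"
  unfolding bigOp_def
proof (intro allI impI)
  fix e :: real assume e: "e > 0"
  from lip obtain N C eps where C: "C > 0" "eps > 0" and L: "\<forall>n\<ge>N. \<forall>mt :: nat \<Rightarrow> real.
        (\<Sum>s<l1. (mt s - m n s)\<^sup>2) < eps \<longrightarrow>
        sqrt (\<Sum>a<k. (F n (\<lambda>s. if s < l1 then mt s else m n s) a - F n (m n) a)\<^sup>2)
          \<le> C * sqrt (\<Sum>s<l1. (mt s - m n s)\<^sup>2)" by blast
  from bnd obtain C' where C': "\<And>n s. s < l1 + l2 \<Longrightarrow>
        (1 / real n) * (\<Sum>a<k. \<Sum>i<n. (\<phi> n s a i)\<^sup>2) \<le> C'" by blast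
  have C'0: "C' \<ge> 0" using C'[of 0 0] l1 by simp
  define K where "K = real l1 * C'"
  have K0: "K \<ge> 0" using C'0 by (simp add: K_def)
  define r2 where "r2 n = spec_norm ({..<k}\<times>{..<n}) (design_matrix (P n)) / real n" for n
  have r20: "r2 n \<ge> 0" for n by (simp add: r2_def spec_nonneg)
  define T where "T n z = (\<Sum>s<l1. (mhat n s z - m n s)\<^sup>2)" for n z
  have Tint: "integrable (measure_pmf (P n)) (T n)" for n
    unfolding T_def by (rule ET_bound(1)[where mm="m n" and n=n and k=k and \<phi>="\<phi> n" and mh="mhat n" and pp="P n" and L=l1 and C'=C'])
       (use m_def mhat_def C' in auto)
  have ET: "measure_pmf.expectation (P n) (T n) \<le> K * r2 n" for n
    unfolding T_def K_def r2_def
    by (rule ET_bound(2)[where mm="m n" and n=n and k=k and \<phi>="\<phi> n" and mh="mhat n" and pp="P n" and L=l1 and C'=C'])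
       (use m_def mhat_def C' in auto)
  have T0: "T n z \<ge> 0" for n z by (simp add: T_def sum_nonneg)
  define M where "M = sqrt (2 * K * C\<^sup>2 / e) + 1"
  have sq0: "sqrt (2 * K * C\<^sup>2 / e) \<ge> 0" using K0 e by simp
  have M0: "M > 0" unfolding M_def using sq0 by linarith
  have "M\<^sup>2 > (sqrt (2 * K * C\<^sup>2 / e))\<^sup>2"
    by (rule power_strict_mono) (use sq0 in \<open>simp_all add: M_def\<close>)
  then have "M\<^sup>2 > 2 * K * C\<^sup>2 / e" using K0 e by simp
  then have "2 * K * C\<^sup>2 < M\<^sup>2 * e" using e by (simp add: divide_less_eq)
  then have KM: "K * C\<^sup>2 / M\<^sup>2 < e / 2" using M0 by (simp add: divide_less_eq field_simps)
  have lim: "(\<lambda>n. K / eps * r2 n) \<longlonglongrightarrow> K / eps * 0"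
    by (intro tendsto_mult tendsto_const) (use D_lim in \<open>simp add: r2_def\<close>)
  have "eventually (\<lambda>n. K / eps * r2 n < e / 2) sequentially"
    by (rule order_tendstoD(2)[OF lim]) (use e in simp)
  then obtain N2 where N2: "\<And>n. n \<ge> N2 \<Longrightarrow> K / eps * r2 n < e / 2"
    unfolding eventually_sequentially by blast
  show "\<exists>M N. \<forall>n\<ge>N. measure_pmf.prob (P n)
        {z. \<bar>sqrt (\<Sum>a<k. (F n (\<lambda>s. if s < l1 then mhat n s z else m n s) a - F n (m n) a)\<^sup>2)\<bar>
          > M * sqrt (spec_norm ({..<k} \<times> {..<n}) (design_matrix (P n)) / real n)} < e"
  proof (intro exI[of _ M] exI[of _ "max N N2"] allI impI)
    fix n assume n: "max N N2 \<le> n"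
    define c where "c = M\<^sup>2 * r2 n / C\<^sup>2"
    have sub: "{z. \<bar>sqrt (\<Sum>a<k. (F n (\<lambda>s. if s < l1 then mhat n s z else m n s) a - F n (m n) a)\<^sup>2)\<bar>
          > M * sqrt (spec_norm ({..<k} \<times> {..<n}) (design_matrix (P n)) / real n)}
       \<subseteq> {z. eps \<le> T n z} \<union> {z. c < T n z}"
    proof
      fix z assume "z \<in> {z. \<bar>sqrt (\<Sum>a<k. (F n (\<lambda>s. if s < l1 then mhat n s z else m n s) a - F n (m n) a)\<^sup>2)\<bar>
          > M * sqrt (spec_norm ({..<k} \<times> {..<n}) (design_matrix (P n)) / real n)}"
      moreover have "\<bar>sqrt (\<Sum>a<k. (F n (\<lambda>s. if s < l1 then mhat n s z else m n s) a - F n (m n) a)\<^sup>2)\<bar>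
          = sqrt (\<Sum>a<k. (F n (\<lambda>s. if s < l1 then mhat n s z else m n s) a - F n (m n) a)\<^sup>2)"
        by (rule abs_of_nonneg) (intro real_sqrt_ge_zero sum_nonneg; simp)
      ultimately have zX: "M * sqrt (r2 n) < sqrt (\<Sum>a<k. (F n (\<lambda>s. if s < l1 then mhat n s z else m n s) a - F n (m n) a)\<^sup>2)"
        by (simp add: r2_def)
      show "z \<in> {z. eps \<le> T n z} \<union> {z. c < T n z}"
      proof (cases "eps \<le> T n z")
        case True thus ?thesis by simp
      next
        case False
        then have "sqrt (\<Sum>a<k. (F n (\<lambda>s. if s < l1 then mhat n s z else m n s) a - F n (m n) a)\<^sup>2)
            \<le> C * sqrt (T n z)"
          using L n unfolding T_def by auto
        then have "M * sqrt (r2 n) < C * sqrt (T n z)" using zX by linarith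
        then have "(M * sqrt (r2 n))\<^sup>2 < (C * sqrt (T n z))\<^sup>2"
          by (rule power_strict_mono) (use M0 r20 in auto)
        then have "M\<^sup>2 * r2 n < C\<^sup>2 * T n z" by (simp add: power_mult_distrib r20 T0)
        then have "c < T n z" using C by (simp add: c_def divide_less_eq mult.commute)
        thus ?thesis by simp
      qed
    qed
    have "measure_pmf.prob (P n)
        {z. \<bar>sqrt (\<Sum>a<k. (F n (\<lambda>s. if s < l1 then mhat n s z else m n s) a - F n (m n) a)\<^sup>2)\<bar>
          > M * sqrt (spec_norm ({..<k} \<times> {..<n}) (design_matrix (P n)) / real n)}
        \<le> measure_pmf.prob (P n) ({z. eps \<le> T n z} \<union> {z. c < T n z})"
      by (rule measure_pmf.finite_measure_mono) (use sub in auto)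
    also have "\<dots> \<le> measure_pmf.prob (P n) {z. eps \<le> T n z} + measure_pmf.prob (P n) {z. c < T n z}"
      by (rule measure_subadditive) (auto simp: measure_pmf.emeasure_eq_measure)
    also have "\<dots> < e / 2 + e / 2"
    proof (rule add_less_le_mono)
      have "measure (measure_pmf (P n)) {x \<in> space (measure_pmf (P n)). eps \<le> T n x}
          \<le> measure_pmf.expectation (P n) (T n) / eps"
        by (rule integral_Markov_inequality_measure[where A=UNIV]) (use Tint T0 C in auto)
      also have "\<dots> \<le> K * r2 n / eps" using ET C by (simp add: divide_right_mono)
      also have "\<dots> < e / 2" using N2[of n] n by simp
      finally show "measure_pmf.prob (P n) {z. eps \<le> T n z} < e / 2" by simp
    next
      show "measure_pmf.prob (P n) {z. c < T n z} \<le> e / 2"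
      proof (cases "r2 n = 0")
        case True
        then have "measure_pmf.expectation (P n) (T n) = 0"
          using ET[of n] integral_nonneg_AE[of "\<lambda>z. T n z"] T0 by (simp add: dual_order.antisym)
        then have "AE z in measure_pmf (P n). T n z = 0"
          using measure_pmf.integral_nonneg_eq_0_iff_AE_banach[OF Tint] T0 by auto
        then have "AE z in measure_pmf (P n). \<not> (c < T n z)"
          using True by (auto simp: c_def elim: AE_mp)
        then have "measure_pmf.prob (P n) {x \<in> space (measure_pmf (P n)). c < T n x} = 0"
          by (subst measure_pmf.prob_Collect_eq_0) auto
        then show ?thesis using e by simp
      next
        case False
        then have r2p: "r2 n > 0" using r20[of n] by simp
        then have cp: "c > 0" using M0 C by (simp add: c_def)
        have "measure_pmf.prob (P n) {z. c < T n z} \<le> measure_pmf.prob (P n) {z. c \<le> T n z}"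
          by (rule measure_pmf.finite_measure_mono) auto
        also have "measure (measure_pmf (P n)) {x \<in> space (measure_pmf (P n)). c \<le> T n x}
          \<le> measure_pmf.expectation (P n) (T n) / c"
          by (rule integral_Markov_inequality_measure[where A=UNIV]) (use Tint T0 cp in auto)
        then have "measure_pmf.prob (P n) {z. c \<le> T n z} \<le> measure_pmf.expectation (P n) (T n) / c"
          by simp
        also have "\<dots> \<le> K * r2 n / c" using ET cp by (simp add: divide_right_mono)
        also have "K * r2 n / c = K * C\<^sup>2 / M\<^sup>2" using r2p M0 C by (simp add: c_def field_simps)
        also have "\<dots> \<le> e / 2" using KM by simp
        finally show ?thesis .
      qed
    qed
    also have "e / 2 + e / 2 = e" by simp
    finally show "measure_pmf.prob (P n)
        {z. \<bar>sqrt (\<Sum>a<k. (F n (\<lambda>s. if s < l1 then mhat n s z else m n s) a - F n (m n) a)\<^sup>2)\<bar>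
          > M * sqrt (spec_norm ({..<k} \<times> {..<n}) (design_matrix (P n)) / real n)} < e" .
  qed
qed

end
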